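(* Let $\mathcal{X}=\mathcal{X}^{(1)}\times\cdots\times\mathcal{X}^{(d)}$ with each $\mathcal{X}^{(j)}$ finite, $G$ an undirected graph on $\{1,\dots,d\}$ and $(C_i)_{i=1}^n$ cliques of $G$ (possibly overlapping) with $\bigcup_iC_i=\{1,\dots,d\}$. Let $\pi\in\mathcal{P}(\mathcal{X})$ be positive, $P\in\mathcal{L}(\mathcal{X})$, and let $M\in\mathcal{L}(\mathcal{X})$ be $(C_i)_{i=1}^n$-factorizable with respect to $G$ and $(L_i)_{i=1}^n$, $L_i\in\mathcal{L}(\mathcal{X}^{(C_i)})$. If $Z(x,(L_i)_{i=1}^n)\ge Z(x,(P^{(C_i)}_\pi)_{i=1}^n)$ for all $x\in\mathcal{X}$, then $D^\pi_{KL}(P\|M)\ge D^\pi_{KL}(P\|\mathbf{P}_\pi)+\sum_{i=1}^nD^{\pi^{(C_i)}}_{KL}(P^{(C_i)}_\pi\|L_i)$. Consequently $\mathbf{P}_\pi$ is the unique minimizer of $D^\pi_{KL}(P\|M)$ over all $(C_i)$-factorizable $M$ (w.r.t. $G$ and some $(L_i)$) with $Z(x,(L_i)_{i=1}^n)\ge Z(x,(P^{(C_i)}_\pi)_{i=1}^n)$ for all $x$, with minimum value $D^\pi_{KL}(P\|\mathbf{P}_\pi)$.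
   Context: $D_{KL}^{\pi}(M\|L):=\sum_{x,y}\pi(x)M(x,y)\ln\frac{M(x,y)}{L(x,y)}$. A clique of $G$ is a vertex set any two of whose elements are joined by an edge. For $C\subseteq\{1,\dots,d\}$: $\mathcal{X}^{(C)}=\prod_{j\in C}\mathcal{X}^{(j)}$, $x^{(C)}=(x^j)_{j\in C}$, $\pi^{(C)}(x^{(C)})=\sum_{x^{(-C)}}\pi(x)$, $P^{(C)}_\pi(x^{(C)},y^{(C)}):=\frac{\sum_{x^{(-C)},y^{(-C)}}\pi(x)P(x,y)}{\pi^{(C)}(x^{(C)})}$. $M$ is $(C_i)_{i=1}^n$-factorizable w.r.t. $G$ and $(L_i)$ if $M(x,y)=\frac{1}{Z(x,(L_i)_{i=1}^n)}\prod_{i=1}^nL_i(x^{(C_i)},y^{(C_i)})$ with $Z(x,(L_i)_{i=1}^n):=\sum_{y\in\mathcal{X}}\prod_{i=1}^nL_i(x^{(C_i)},y^{(C_i)})$. $\mathbf{P}_\pi(x,y):=\frac{1}{Z(x,(P^{(C_i)}_\pi)_{i=1}^n)}\prod_{i=1}^nP^{(C_i)}_\pi(x^{(C_i)},y^{(C_i)})$. *)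

theory Defs
  imports "HOL-Analysis.Analysis" "HOL-Library.Extended_Real"
begin

text \<open>States of X = X(1) x ... x X(d) are extensional functions on the index set
  I = {1..d}; the state space is PiE I S. For C a subset of I, x restricted to C
  (restrict x C) is the element x^(C) of X^(C) = PiE C S.\<close>

definition prob_dist :: "'s set \<Rightarrow> ('s \<Rightarrow> real) \<Rightarrow> bool" where
  "prob_dist A p \<longleftrightarrow> (\<forall>x\<in>A. p x \<ge> 0) \<and> sum p A = 1"

definition markov :: "'s set \<Rightarrow> ('s \<Rightarrow> 's \<Rightarrow> real) \<Rightarrow> bool" where
  "markov A K \<longleftrightarrow> (\<forall>x\<in>A. (\<forall>y\<in>A. K x y \<ge> 0) \<and> sum (K x) A = 1)"

definition kl_term :: "real \<Rightarrow> real \<Rightarrow> ereal" where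
  "kl_term m l = (if m = 0 then 0 else if l = 0 then \<infinity> else ereal (m * ln (m / l)))"

definition KL :: "'s set \<Rightarrow> ('s \<Rightarrow> real) \<Rightarrow> ('s \<Rightarrow> 's \<Rightarrow> real) \<Rightarrow> ('s \<Rightarrow> 's \<Rightarrow> real) \<Rightarrow> ereal" where
  "KL A p M L = (\<Sum>x\<in>A. \<Sum>y\<in>A. ereal (p x) * kl_term (M x y) (L x y))"

definition marg :: "nat set \<Rightarrow> (nat \<Rightarrow> 'a set) \<Rightarrow> nat set \<Rightarrow> ((nat \<Rightarrow> 'a) \<Rightarrow> real)
    \<Rightarrow> (nat \<Rightarrow> 'a) \<Rightarrow> real" where
  "marg I S C p xc = (\<Sum>x\<in>{x \<in> PiE I S. restrict x C = xc}. p x)"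

definition marg_kernel :: "nat set \<Rightarrow> (nat \<Rightarrow> 'a set) \<Rightarrow> nat set \<Rightarrow> ((nat \<Rightarrow> 'a) \<Rightarrow> real)
    \<Rightarrow> ((nat \<Rightarrow> 'a) \<Rightarrow> (nat \<Rightarrow> 'a) \<Rightarrow> real) \<Rightarrow> (nat \<Rightarrow> 'a) \<Rightarrow> (nat \<Rightarrow> 'a) \<Rightarrow> real" where
  "marg_kernel I S C p P xc yc =
     (\<Sum>x\<in>{x \<in> PiE I S. restrict x C = xc}. \<Sum>y\<in>{y \<in> PiE I S. restrict y C = yc}. p x * P x y)
       / marg I S C p xc"

definition Zf :: "nat set \<Rightarrow> (nat \<Rightarrow> 'a set) \<Rightarrow> nat \<Rightarrow> (nat \<Rightarrow> nat set)
    \<Rightarrow> (nat \<Rightarrow> (nat \<Rightarrow> 'a) \<Rightarrow> (nat \<Rightarrow> 'a) \<Rightarrow> real) \<Rightarrow> (nat \<Rightarrow> 'a) \<Rightarrow> real" where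
  "Zf I S n C L x = (\<Sum>y\<in>PiE I S. \<Prod>i\<in>{1..n}. L i (restrict x (C i)) (restrict y (C i)))"

definition clique :: "(nat \<Rightarrow> nat \<Rightarrow> bool) \<Rightarrow> nat set \<Rightarrow> bool" where
  "clique E K \<longleftrightarrow> (\<forall>j\<in>K. \<forall>k\<in>K. j \<noteq> k \<longrightarrow> E j k)"

definition factorizable :: "nat set \<Rightarrow> (nat \<Rightarrow> 'a set) \<Rightarrow> (nat \<Rightarrow> nat \<Rightarrow> bool) \<Rightarrow> nat
    \<Rightarrow> (nat \<Rightarrow> nat set) \<Rightarrow> (nat \<Rightarrow> (nat \<Rightarrow> 'a) \<Rightarrow> (nat \<Rightarrow> 'a) \<Rightarrow> real)
    \<Rightarrow> ((nat \<Rightarrow> 'a) \<Rightarrow> (nat \<Rightarrow> 'a) \<Rightarrow> real) \<Rightarrow> bool" where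
  "factorizable I S E n C L M \<longleftrightarrow>
     (\<forall>i\<in>{1..n}. C i \<subseteq> I \<and> clique E (C i)) \<and>
     (\<forall>x\<in>PiE I S. \<forall>y\<in>PiE I S.
        M x y = (\<Prod>i\<in>{1..n}. L i (restrict x (C i)) (restrict y (C i))) / Zf I S n C L x)"

definition proj_kernel :: "nat set \<Rightarrow> (nat \<Rightarrow> 'a set) \<Rightarrow> nat \<Rightarrow> (nat \<Rightarrow> nat set)
    \<Rightarrow> ((nat \<Rightarrow> 'a) \<Rightarrow> real) \<Rightarrow> ((nat \<Rightarrow> 'a) \<Rightarrow> (nat \<Rightarrow> 'a) \<Rightarrow> real)
    \<Rightarrow> (nat \<Rightarrow> 'a) \<Rightarrow> (nat \<Rightarrow> 'a) \<Rightarrow> real" where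
  "proj_kernel I S n C p P x y =
     (\<Prod>i\<in>{1..n}. marg_kernel I S (C i) p P (restrict x (C i)) (restrict y (C i)))
       / Zf I S n C (\<lambda>i. marg_kernel I S (C i) p P) x"

end

theory Submission
  imports Defs
begin


lemma KL_real:
  assumes "\<forall>x\<in>A. \<forall>y\<in>A. m x y \<noteq> 0 \<longrightarrow> l x y \<noteq> 0"
  shows "KL A q m l = ereal (\<Sum>x\<in>A. \<Sum>y\<in>A. q x * (if m x y = 0 then 0 else m x y * ln (m x y / l x y)))"
proof -
  have "KL A q m l = (\<Sum>x\<in>A. \<Sum>y\<in>A. ereal (q x * (if m x y = 0 then 0 else m x y * ln (m x y / l x y))))"
    unfolding KL_def kl_term_def using assms by (intro sum.cong refl) auto
  then show ?thesis by simp
qed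

lemma KL_inf:
  assumes "finite A" "x \<in> A" "y \<in> A" "q x > 0" "m x y \<noteq> 0" "l x y = 0"
  shows "KL A q m l = \<infinity>"
proof -
  have "(\<Sum>y\<in>A. ereal (q x) * kl_term (m x y) (l x y)) = \<infinity>"
    unfolding sum_Pinfty using assms by (auto simp: kl_term_def intro!: bexI[of _ y])
  then show ?thesis unfolding KL_def sum_Pinfty using assms by auto
qed

lemma gibbs_row:
  fixes a b :: "'s \<Rightarrow> real"
  assumes A: "finite A" and nn: "\<forall>y\<in>A. a y \<ge> 0 \<and> b y \<ge> 0" and sa: "sum a A = 1" and sb: "sum b A = 1"
    and supp: "\<forall>y\<in>A. a y \<noteq> 0 \<longrightarrow> b y \<noteq> 0"
  shows "(\<Sum>y\<in>A. if a y = 0 then 0 else a y * ln (a y / b y)) \<ge> 0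
    \<and> ((\<Sum>y\<in>A. if a y = 0 then 0 else a y * ln (a y / b y)) = 0 \<longrightarrow> (\<forall>y\<in>A. a y = b y))"
proof -
  define t where "t y = (if a y = 0 then 0 else a y * ln (a y / b y))" for y
  have tb: "t y - (a y - b y) \<ge> 0" if y: "y \<in> A" for y
  proof (cases "a y = 0")
    case True then show ?thesis using nn y by (simp add: t_def)
  next
    case False
    then have ap: "a y > 0" and bp: "b y > 0" using nn supp y by (auto simp: less_le)
    have "ln (b y / a y) \<le> b y / a y - 1" using ap bp by (intro ln_le_minus_one) simp
    then have "a y * ln (b y / a y) \<le> a y * (b y / a y - 1)" using ap by (intro mult_left_mono) auto
    also have "\<dots> = b y - a y" using ap by (simp add: field_simps)
    finally show ?thesis using ap bp False by (simp add: t_def ln_div algebra_simps)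
  qed
  have st: "(\<Sum>y\<in>A. t y - (a y - b y)) = sum t A" using sa sb by (simp add: sum_subtractf)
  have "(\<Sum>y\<in>A. t y - (a y - b y)) \<ge> 0" by (rule sum_nonneg) (rule tb)
  then have "sum t A \<ge> 0" using st by simp
  moreover have "\<forall>y\<in>A. a y = b y" if z: "sum t A = 0"
  proof
    fix y assume y: "y \<in> A"
    have "(\<Sum>y\<in>A. t y - (a y - b y)) = 0" using st z by simp
    then have "\<forall>y\<in>A. t y - (a y - b y) = 0"
      using sum_nonneg_eq_0_iff[OF A, of "\<lambda>y. t y - (a y - b y)"] tb by blast
    then have "t y - (a y - b y) = 0" using y by blast
    show "a y = b y"
    proof (cases "a y = 0")
      case True then show ?thesis using \<open>t y - (a y - b y) = 0\<close> by (simp add: t_def)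
    next
      case False
      then have ap: "a y > 0" and bp: "b y > 0" using nn supp y by (auto simp: less_le)
      have "a y * ln (a y / b y) = a y - b y"
        using \<open>t y - (a y - b y) = 0\<close> False by (simp add: t_def)
      then have "a y * ln (b y / a y) = b y - a y" using ap bp by (simp add: ln_div algebra_simps)
      then have "ln (b y / a y) = (b y - a y) / a y" using ap by (simp add: field_simps)
      also have "\<dots> = b y / a y - 1" using ap by (simp add: diff_divide_distrib)
      finally have "ln (b y / a y) = b y / a y - 1" .
      then have "b y / a y = 1" using ap bp by (intro ln_eq_minus_one) auto
      then show ?thesis using ap by (simp add: field_simps)
    qed
  qed
  ultimately show ?thesis unfolding t_def by blast
qed

lemma KL_gibbs:
  assumes A: "finite A" and q: "\<forall>x\<in>A. q x > 0" and ma: "markov A a" and mb: "markov A b"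
  shows "KL A q a b \<ge> 0 \<and> (KL A q a b = 0 \<longrightarrow> (\<forall>x\<in>A. \<forall>y\<in>A. a x y = b x y))"
proof (cases "\<exists>x\<in>A. \<exists>y\<in>A. a x y \<noteq> 0 \<and> b x y = 0")
  case True
  then obtain x y where "x \<in> A" "y \<in> A" "a x y \<noteq> 0" "b x y = 0" by blast
  then have "KL A q a b = \<infinity>" using KL_inf[OF A] q by blast
  then show ?thesis by simp
next
  case False
  then have supp: "\<forall>x\<in>A. \<forall>y\<in>A. a x y \<noteq> 0 \<longrightarrow> b x y \<noteq> 0" by blast
  define G where "G x = (\<Sum>y\<in>A. if a x y = 0 then 0 else a x y * ln (a x y / b x y))" for x
  have g: "G x \<ge> 0 \<and> (G x = 0 \<longrightarrow> (\<forall>y\<in>A. a x y = b x y))" if "x \<in> A" for x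
    unfolding G_def using that ma mb supp unfolding markov_def
    by (intro gibbs_row[OF A]) auto
  have "KL A q a b = ereal (\<Sum>x\<in>A. q x * G x)"
    unfolding KL_real[OF supp] G_def by (simp add: sum_distrib_left)
  moreover have "(\<Sum>x\<in>A. q x * G x) \<ge> 0" using g q by (intro sum_nonneg) (auto intro: less_imp_le)
  moreover have "\<forall>x\<in>A. \<forall>y\<in>A. a x y = b x y" if z: "(\<Sum>x\<in>A. q x * G x) = 0"
  proof (intro ballI)
    fix x y assume x: "x \<in> A" and y: "y \<in> A"
    have nn': "\<And>x. x \<in> A \<Longrightarrow> 0 \<le> q x * G x" using g q by (auto intro: less_imp_le)
    have "q x * G x = 0" using sum_nonneg_eq_0_iff[OF A, of "\<lambda>x. q x * G x"] z nn' x
      by auto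
    then have "G x = 0" using q x by auto
    then show "a x y = b x y" using g x y by blast
  qed
  ultimately show ?thesis by auto
qed



locale kset =
  fixes I :: "nat set" and S :: "nat \<Rightarrow> 'a set" and n :: nat and C :: "nat \<Rightarrow> nat set"
    and p :: "(nat \<Rightarrow> 'a) \<Rightarrow> real" and P :: "(nat \<Rightarrow> 'a) \<Rightarrow> (nat \<Rightarrow> 'a) \<Rightarrow> real"
  assumes finI: "finite I" and finS: "\<forall>j\<in>I. finite (S j)"
    and Csub: "\<forall>i\<in>{1..n}. C i \<subseteq> I"
    and pdist: "prob_dist (PiE I S) p"
    and ppos: "\<forall>x\<in>PiE I S. p x > 0"
    and Pmk: "markov (PiE I S) P"
begin

abbreviation "X \<equiv> PiE I S"
definition fib :: "nat set \<Rightarrow> (nat \<Rightarrow> 'a) \<Rightarrow> (nat \<Rightarrow> 'a) set" where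
  "fib D xc = {x \<in> X. restrict x D = xc}"

lemma finX: "finite X"
  using finI finS by (intro finite_PiE) auto

lemma finPi: assumes "D \<subseteq> I" shows "finite (PiE D S)"
proof (rule finite_PiE)
  show "finite D" using finite_subset[OF assms finI] .
  show "\<And>i. i \<in> D \<Longrightarrow> finite (S i)" using finS assms by auto
qed

lemma Xne: "X \<noteq> {}"
  using pdist unfolding prob_dist_def by auto

lemma restr_in: "D \<subseteq> I \<Longrightarrow> x \<in> X \<Longrightarrow> restrict x D \<in> PiE D S"
  by (auto simp: PiE_iff)

lemma fib_ne: assumes "D \<subseteq> I" "xc \<in> PiE D S" shows "fib D xc \<noteq> {}"
proof -
  obtain x0 where x0: "x0 \<in> X" using Xne by blast
  define x where "x = (\<lambda>j. if j \<in> D then xc j else x0 j)"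
  have "x \<in> X" using assms x0 unfolding x_def by (auto simp: PiE_iff extensional_def)
  moreover have "restrict x D = xc" using assms unfolding x_def
    by (auto simp: PiE_iff extensional_def restrict_def)
  ultimately show ?thesis unfolding fib_def by blast
qed

lemma fib_sub: "fib D xc \<subseteq> X" unfolding fib_def by auto
lemma fib_X: "x \<in> fib D xc \<Longrightarrow> x \<in> X" unfolding fib_def by auto
lemma fib_r: "x \<in> fib D xc \<Longrightarrow> restrict x D = xc" unfolding fib_def by auto
lemma fin_fib: "finite (fib D xc)" by (rule finite_subset[OF fib_sub finX])
lemma p_pos': "x \<in> X \<Longrightarrow> p x > 0" using ppos by auto
lemma p_nn: "x \<in> X \<Longrightarrow> p x \<ge> 0" using p_pos'[of x] by simp

lemma group: assumes "D \<subseteq> I" shows "(\<Sum>x\<in>X. f x) = (\<Sum>xc\<in>PiE D S. \<Sum>x\<in>fib D xc. f x)"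
  unfolding fib_def
  by (rule sum.group[symmetric, OF finX finPi[OF assms]]) (use assms restr_in in auto)

lemma P_nonneg: "x \<in> X \<Longrightarrow> y \<in> X \<Longrightarrow> P x y \<ge> 0" using Pmk unfolding markov_def by auto
lemma P_sum: "x \<in> X \<Longrightarrow> sum (P x) X = 1" using Pmk unfolding markov_def by auto
lemma p_sum: "sum p X = 1" using pdist unfolding prob_dist_def by auto

abbreviation "Q i \<equiv> marg_kernel I S (C i) p P"
abbreviation "pm i \<equiv> marg I S (C i) p"
abbreviation "ZQ \<equiv> Zf I S n C Q"
abbreviation "PP \<equiv> proj_kernel I S n C p P"

definition num :: "nat set \<Rightarrow> (nat \<Rightarrow> 'a) \<Rightarrow> (nat \<Rightarrow> 'a) \<Rightarrow> real" where
  "num D xc yc = (\<Sum>x\<in>fib D xc. \<Sum>y\<in>fib D yc. p x * P x y)"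

lemma marg_eq: "marg I S D p xc = sum p (fib D xc)" unfolding marg_def fib_def by simp
lemma mk_eq: "marg_kernel I S D p P xc yc = num D xc yc / marg I S D p xc"
  unfolding marg_kernel_def num_def fib_def by simp

lemma marg_pos: assumes "D \<subseteq> I" "xc \<in> PiE D S" shows "marg I S D p xc > 0"
proof -
  have "finite (fib D xc)" by (rule fin_fib)
  then show ?thesis unfolding marg_eq using fib_ne[OF assms] fib_X p_pos'
    by (intro sum_pos) auto
qed

lemma num_nonneg: "num D xc yc \<ge> 0"
  unfolding num_def using fib_X p_nn P_nonneg
  by (intro sum_nonneg mult_nonneg_nonneg) auto

lemma mk_nonneg: "marg_kernel I S D p P xc yc \<ge> 0"
proof -
  have "marg I S D p xc \<ge> 0" unfolding marg_eq using fib_X p_nn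
    by (intro sum_nonneg) auto
  then show ?thesis unfolding mk_eq using num_nonneg by simp
qed

lemma num_eq: assumes "D \<subseteq> I" "xc \<in> PiE D S"
  shows "num D xc yc = marg I S D p xc * marg_kernel I S D p P xc yc"
  using marg_pos[OF assms] unfolding mk_eq by simp

lemma mk_markov: assumes "D \<subseteq> I" shows "markov (PiE D S) (marg_kernel I S D p P)"
  unfolding markov_def
proof (intro ballI conjI)
  fix xc yc assume "xc \<in> PiE D S" "yc \<in> PiE D S"
  show "marg_kernel I S D p P xc yc \<ge> 0" by (rule mk_nonneg)
next
  fix xc assume xc: "xc \<in> PiE D S"
  have "(\<Sum>yc\<in>PiE D S. num D xc yc) = (\<Sum>x\<in>fib D xc. \<Sum>yc\<in>PiE D S. \<Sum>y\<in>fib D yc. p x * P x y)"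
    unfolding num_def by (rule sum.swap)
  also have "\<dots> = (\<Sum>x\<in>fib D xc. \<Sum>y\<in>X. p x * P x y)"
    using group[OF assms, of "\<lambda>y. p _ * P _ y"] by simp
  also have "\<dots> = (\<Sum>x\<in>fib D xc. p x)"
    using fib_X P_sum by (intro sum.cong) (auto simp: sum_distrib_left[symmetric])
  finally have "(\<Sum>yc\<in>PiE D S. num D xc yc) = marg I S D p xc" unfolding marg_eq .
  then show "sum (marg_kernel I S D p P xc) (PiE D S) = 1"
    unfolding mk_eq using marg_pos[OF assms xc] by (simp add: sum_divide_distrib[symmetric])
qed


lemma dsum: assumes D: "D \<subseteq> I"
  shows "(\<Sum>x\<in>X. \<Sum>y\<in>X. p x * P x y * h (restrict x D) (restrict y D))
       = (\<Sum>xc\<in>PiE D S. \<Sum>yc\<in>PiE D S. num D xc yc * h xc yc)"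
proof -
  have "(\<Sum>x\<in>X. \<Sum>y\<in>X. p x * P x y * h (restrict x D) (restrict y D))
     = (\<Sum>xc\<in>PiE D S. \<Sum>x\<in>fib D xc. \<Sum>y\<in>X. p x * P x y * h (restrict x D) (restrict y D))"
    by (rule group[OF D])
  also have "\<dots> = (\<Sum>xc\<in>PiE D S. \<Sum>x\<in>fib D xc. \<Sum>yc\<in>PiE D S. \<Sum>y\<in>fib D yc. p x * P x y * h xc yc)"
  proof (rule sum.cong[OF refl], rule sum.cong[OF refl])
    fix xc x assume "xc \<in> PiE D S" "x \<in> fib D xc"
    have rx: "restrict x D = xc" using fib_r[OF \<open>x \<in> fib D xc\<close>] .
    have "(\<Sum>y\<in>X. p x * P x y * h (restrict x D) (restrict y D))
       = (\<Sum>yc\<in>PiE D S. \<Sum>y\<in>fib D yc. p x * P x y * h (restrict x D) (restrict y D))"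
      by (rule group[OF D])
    also have "\<dots> = (\<Sum>yc\<in>PiE D S. \<Sum>y\<in>fib D yc. p x * P x y * h xc yc)"
      using rx fib_r by (intro sum.cong refl) auto
    finally show "(\<Sum>y\<in>X. p x * P x y * h (restrict x D) (restrict y D)) = \<dots>" .
  qed
  also have "\<dots> = (\<Sum>xc\<in>PiE D S. \<Sum>yc\<in>PiE D S. \<Sum>x\<in>fib D xc. \<Sum>y\<in>fib D yc. p x * P x y * h xc yc)"
    by (intro sum.cong refl sum.swap)
  also have "\<dots> = (\<Sum>xc\<in>PiE D S. \<Sum>yc\<in>PiE D S. num D xc yc * h xc yc)"
    unfolding num_def by (simp add: sum_distrib_right)
  finally show ?thesis .
qed

lemma Q_pos: assumes D: "D \<subseteq> I" and xy: "x \<in> X" "y \<in> X" and P: "P x y > 0"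
  shows "marg_kernel I S D p P (restrict x D) (restrict y D) > 0"
proof -
  have rx: "restrict x D \<in> PiE D S" using restr_in[OF D xy(1)] .
  have "x \<in> fib D (restrict x D)" "y \<in> fib D (restrict y D)" using xy unfolding fib_def by auto
  have "0 < p x * P x y" using p_pos'[OF xy(1)] P by simp
  also have "\<dots> \<le> (\<Sum>y'\<in>fib D (restrict y D). p x * P x y')"
    using \<open>y \<in> fib D _\<close> fin_fib xy fib_X P_nonneg p_nn
    by (intro member_le_sum) (auto intro!: mult_nonneg_nonneg)
  also have "\<dots> \<le> num D (restrict x D) (restrict y D)"
    unfolding num_def using \<open>x \<in> fib D _\<close> fin_fib fib_X P_nonneg p_nn
    by (intro member_le_sum[where f="\<lambda>x'. \<Sum>y'\<in>fib D (restrict y D). p x' * P x' y'"])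
       (auto intro!: mult_nonneg_nonneg sum_nonneg)
  finally show ?thesis unfolding mk_eq using marg_pos[OF D rx] by simp
qed

lemma Q_pos_ex: assumes D: "D \<subseteq> I" and "marg_kernel I S D p P xc yc > 0"
  shows "\<exists>x\<in>X. \<exists>y\<in>X. restrict x D = xc \<and> restrict y D = yc \<and> P x y > 0"
proof (rule ccontr)
  assume "\<not> ?thesis"
  then have "\<forall>x\<in>fib D xc. \<forall>y\<in>fib D yc. P x y \<le> 0" unfolding fib_def by (auto simp: not_less)
  then have "num D xc yc = 0" unfolding num_def
    using fib_X P_nonneg by (intro sum.neutral ballI) (auto simp: order.antisym)
  then show False using assms(2) unfolding mk_eq by simp
qed

lemma ZQ_pos: assumes x: "x \<in> X" shows "ZQ x > 0"
proof -
  have "\<exists>y\<in>X. P x y > 0"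
  proof (rule ccontr)
    assume "\<not> ?thesis" then have "\<forall>y\<in>X. P x y \<le> 0" by (auto simp: not_less)
    then have "sum (P x) X = 0" using P_nonneg[OF x] by (intro sum.neutral) (auto simp: order.antisym)
    then show False using P_sum[OF x] by simp
  qed
  then obtain y where y: "y \<in> X" "P x y > 0" by blast
  show ?thesis unfolding Zf_def
  proof (rule sum_pos2[OF finX y(1)])
    show "0 < (\<Prod>i\<in>{1..n}. Q i (restrict x (C i)) (restrict y (C i)))"
      using Q_pos x y Csub by (intro prod_pos) auto
    fix z assume "z \<in> X"
    show "0 \<le> (\<Prod>ia\<in>{1..n}. Q ia (restrict x (C ia)) (restrict z (C ia)))"
      using mk_nonneg by (auto intro: prod_nonneg)
  qed
qed

lemma PP_markov: "markov X PP"
  unfolding markov_def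
proof (intro ballI conjI)
  fix x y assume "x \<in> X" "y \<in> X"
  show "PP x y \<ge> 0" unfolding proj_kernel_def using ZQ_pos[OF \<open>x \<in> X\<close>] mk_nonneg
    by (auto intro!: divide_nonneg_pos prod_nonneg)
next
  fix x assume "x \<in> X"
  show "sum (PP x) X = 1" unfolding proj_kernel_def using ZQ_pos[OF \<open>x \<in> X\<close>]
    by (simp add: sum_divide_distrib[symmetric] Zf_def)
qed


definition R :: "((nat \<Rightarrow> 'a) \<Rightarrow> (nat \<Rightarrow> 'a) \<Rightarrow> real) \<Rightarrow> real" where
  "R K = (\<Sum>x\<in>X. \<Sum>y\<in>X. p x * (if P x y = 0 then 0 else P x y * ln (P x y / K x y)))"

lemma prodQ_pos: assumes "x \<in> X" "y \<in> X" "P x y > 0"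
  shows "(\<Prod>i\<in>{1..n}. Q i (restrict x (C i)) (restrict y (C i))) > 0"
  using Q_pos assms Csub by (intro prod_pos) auto

lemma PP_pos: assumes "x \<in> X" "y \<in> X" "P x y > 0" shows "PP x y > 0"
  unfolding proj_kernel_def using prodQ_pos[OF assms] ZQ_pos[OF assms(1)] by (rule divide_pos_pos)

lemma P_ne: "x \<in> X \<Longrightarrow> y \<in> X \<Longrightarrow> P x y \<noteq> 0 \<Longrightarrow> P x y > 0"
  using P_nonneg[of x y] by linarith

lemma KL_PP: "KL X p P PP = ereal (R PP)"
  unfolding R_def
proof (intro KL_real ballI impI)
  fix x y assume "x \<in> X" "y \<in> X" "P x y \<noteq> 0"
  then show "PP x y \<noteq> 0" using PP_pos P_ne by (metis less_irrefl)
qed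

lemma main:
  assumes Lmk: "\<forall>i\<in>{1..n}. markov (PiE (C i) S) (L i)"
    and fact: "\<forall>x\<in>X. \<forall>y\<in>X. M x y = (\<Prod>i\<in>{1..n}. L i (restrict x (C i)) (restrict y (C i))) / Zf I S n C L x"
    and Zge: "\<forall>x\<in>X. Zf I S n C L x \<ge> ZQ x"
  shows "KL X p P M \<ge> KL X p P PP + (\<Sum>i\<in>{1..n}. KL (PiE (C i) S) (pm i) (Q i) (L i))"
    and "KL X p P M = KL X p P PP \<Longrightarrow> \<forall>x\<in>X. \<forall>y\<in>X. M x y = PP x y"
proof -
  have gib: "KL (PiE (C i) S) (pm i) (Q i) (L i) \<ge> 0 \<and> (KL (PiE (C i) S) (pm i) (Q i) (L i) = 0 \<longrightarrow>
      (\<forall>xc\<in>PiE (C i) S. \<forall>yc\<in>PiE (C i) S. Q i xc yc = L i xc yc))" if i: "i \<in> {1..n}" for i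
    using Csub i Lmk marg_pos by (intro KL_gibbs finPi mk_markov) auto
  have "(KL X p P M \<ge> KL X p P PP + (\<Sum>i\<in>{1..n}. KL (PiE (C i) S) (pm i) (Q i) (L i)))
     \<and> (KL X p P M = KL X p P PP \<longrightarrow> (\<forall>x\<in>X. \<forall>y\<in>X. M x y = PP x y))"
  proof (cases "\<exists>i\<in>{1..n}. \<exists>xc\<in>PiE (C i) S. \<exists>yc\<in>PiE (C i) S. Q i xc yc \<noteq> 0 \<and> L i xc yc = 0")
    case True
    then obtain i xc yc where i: "i \<in> {1..n}" and xc: "xc \<in> PiE (C i) S" and yc: "yc \<in> PiE (C i) S"
      and q: "Q i xc yc \<noteq> 0" and l: "L i xc yc = 0" by blast
    have "Q i xc yc > 0" using q mk_nonneg[of "C i"] by (simp add: less_le)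
    then obtain x y where x: "x \<in> X" and y: "y \<in> X" and rx: "restrict x (C i) = xc"
      and ry: "restrict y (C i) = yc" and Pxy: "P x y > 0"
      using Q_pos_ex Csub i by blast
    have "(\<Prod>i\<in>{1..n}. L i (restrict x (C i)) (restrict y (C i))) = 0"
      using i rx ry l by (intro prod_zero) auto
    then have "M x y = 0" using fact x y by simp
    then have "KL X p P M = \<infinity>" using KL_inf[OF finX x y] Pxy ppos x by auto
    then show ?thesis using KL_PP by simp
  next
    case False
    then have supp: "\<And>i xc yc. i \<in> {1..n} \<Longrightarrow> xc \<in> PiE (C i) S \<Longrightarrow> yc \<in> PiE (C i) S
        \<Longrightarrow> Q i xc yc \<noteq> 0 \<Longrightarrow> L i xc yc \<noteq> 0" by blast
    have Lnn: "\<And>i xc yc. i \<in> {1..n} \<Longrightarrow> xc \<in> PiE (C i) S \<Longrightarrow> yc \<in> PiE (C i) S \<Longrightarrow> L i xc yc \<ge> 0"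
      using Lmk unfolding markov_def by auto
    have Lpos: "L i (restrict x (C i)) (restrict y (C i)) > 0"
      and Qpos: "Q i (restrict x (C i)) (restrict y (C i)) > 0"
      if "i \<in> {1..n}" "x \<in> X" "y \<in> X" "P x y > 0" for i x y
    proof -
      show qp: "Q i (restrict x (C i)) (restrict y (C i)) > 0" using Q_pos that Csub by auto
      have "restrict x (C i) \<in> PiE (C i) S" "restrict y (C i) \<in> PiE (C i) S"
        using restr_in Csub that by auto
      then show "L i (restrict x (C i)) (restrict y (C i)) > 0"
        using supp[OF that(1)] Lnn[OF that(1)] qp by (simp add: less_le)
    qed
    have ZLpos: "Zf I S n C L x > 0" if "x \<in> X" for x using Zge ZQ_pos that by (meson less_le_trans)
    define h where "h i xc yc = (if Q i xc yc = 0 then 0 else ln (Q i xc yc) - ln (L i xc yc))" for i xc yc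
    define Ri where "Ri i = (\<Sum>xc\<in>PiE (C i) S. \<Sum>yc\<in>PiE (C i) S. pm i xc *
        (if Q i xc yc = 0 then 0 else Q i xc yc * ln (Q i xc yc / L i xc yc)))" for i
    define T where "T = (\<Sum>x\<in>X. p x * (ln (Zf I S n C L x) - ln (ZQ x)))"
    have KLi: "KL (PiE (C i) S) (pm i) (Q i) (L i) = ereal (Ri i)" if "i \<in> {1..n}" for i
      unfolding Ri_def using supp[OF that] by (intro KL_real) auto
    have KLM: "KL X p P M = ereal (R M)"
      unfolding R_def
    proof (intro KL_real ballI impI)
      fix x y assume x: "x \<in> X" and y: "y \<in> X" and "P x y \<noteq> 0"
      then have "P x y > 0" using P_ne by auto
      then have pp: "(\<Prod>i\<in>{1..n}. L i (restrict x (C i)) (restrict y (C i))) > 0"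
        using Lpos x y by (intro prod_pos) auto
      have "M x y = (\<Prod>i\<in>{1..n}. L i (restrict x (C i)) (restrict y (C i))) / Zf I S n C L x"
        using fact x y by blast
      also have "\<dots> > 0" using pp ZLpos[OF x] by (rule divide_pos_pos)
      finally show "M x y \<noteq> 0" by simp
    qed
    have pt: "p x * (if P x y = 0 then 0 else P x y * ln (P x y / M x y))
       = p x * (if P x y = 0 then 0 else P x y * ln (P x y / PP x y))
         + (\<Sum>i\<in>{1..n}. p x * P x y * h i (restrict x (C i)) (restrict y (C i)))
         + p x * P x y * (ln (Zf I S n C L x) - ln (ZQ x))" if x: "x \<in> X" and y: "y \<in> X" for x y
    proof (cases "P x y = 0")
      case True then show ?thesis by simp
    next
      case False
      then have Pp: "P x y > 0" using P_ne x y by auto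
      let ?pL = "\<Prod>i\<in>{1..n}. L i (restrict x (C i)) (restrict y (C i))"
      let ?pQ = "\<Prod>i\<in>{1..n}. Q i (restrict x (C i)) (restrict y (C i))"
      have pL: "?pL > 0" using Lpos x y Pp by (intro prod_pos) auto
      have pQ: "?pQ > 0" using prodQ_pos x y Pp by auto
      have lpL: "ln ?pL = (\<Sum>i\<in>{1..n}. ln (L i (restrict x (C i)) (restrict y (C i))))"
        by (rule ln_prod) (simp, metis Lpos x y Pp less_irrefl)
      have lpQ: "ln ?pQ = (\<Sum>i\<in>{1..n}. ln (Q i (restrict x (C i)) (restrict y (C i))))"
        by (rule ln_prod) (simp, metis Qpos x y Pp less_irrefl)
      have e1: "ln (P x y / M x y) = ln (P x y) - ln ?pL + ln (Zf I S n C L x)"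
      proof -
        have Mxy: "M x y = ?pL / Zf I S n C L x" using fact x y by blast
        have Mp: "M x y > 0" unfolding Mxy using pL ZLpos[OF x] by (rule divide_pos_pos)
        have "ln (P x y / M x y) = ln (P x y) - ln (M x y)" using Pp Mp by (rule ln_divide_pos)
        moreover have "ln (M x y) = ln ?pL - ln (Zf I S n C L x)"
          unfolding Mxy using pL ZLpos[OF x] by (rule ln_divide_pos)
        ultimately show ?thesis by simp
      qed
      have e2: "ln (P x y / PP x y) = ln (P x y) - ln ?pQ + ln (ZQ x)"
      proof -
        have Mxy: "PP x y = ?pQ / ZQ x" unfolding proj_kernel_def by simp
        have Mp: "PP x y > 0" unfolding Mxy using pQ ZQ_pos[OF x] by (rule divide_pos_pos)
        have "ln (P x y / PP x y) = ln (P x y) - ln (PP x y)" using Pp Mp by (rule ln_divide_pos)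
        moreover have "ln (PP x y) = ln ?pQ - ln (ZQ x)"
          unfolding Mxy using pQ ZQ_pos[OF x] by (rule ln_divide_pos)
        ultimately show ?thesis by simp
      qed
      have e3: "(\<Sum>i\<in>{1..n}. h i (restrict x (C i)) (restrict y (C i))) = ln ?pQ - ln ?pL"
        unfolding lpL lpQ sum_subtractf[symmetric] h_def using Qpos x y Pp
        by (intro sum.cong refl) (auto simp: less_imp_neq[symmetric])
      have "(\<Sum>i\<in>{1..n}. p x * P x y * h i (restrict x (C i)) (restrict y (C i)))
         = p x * P x y * (ln ?pQ - ln ?pL)" unfolding e3[symmetric] by (simp add: sum_distrib_left)
      then show ?thesis using False by (simp add: e1 e2 algebra_simps)
    qed
    have "R M = R PP + (\<Sum>x\<in>X. \<Sum>y\<in>X. \<Sum>i\<in>{1..n}. p x * P x y * h i (restrict x (C i)) (restrict y (C i)))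
         + (\<Sum>x\<in>X. \<Sum>y\<in>X. p x * P x y * (ln (Zf I S n C L x) - ln (ZQ x)))"
      unfolding R_def by (simp add: pt sum.distrib)
    also have "(\<Sum>x\<in>X. \<Sum>y\<in>X. \<Sum>i\<in>{1..n}. p x * P x y * h i (restrict x (C i)) (restrict y (C i)))
       = (\<Sum>i\<in>{1..n}. \<Sum>x\<in>X. \<Sum>y\<in>X. p x * P x y * h i (restrict x (C i)) (restrict y (C i)))"
      by (subst sum.swap, rule sum.cong[OF refl], rule sum.swap)
    also have "\<dots> = (\<Sum>i\<in>{1..n}. Ri i)"
    proof (rule sum.cong[OF refl])
      fix i assume i: "i \<in> {1..n}"
      have "(\<Sum>x\<in>X. \<Sum>y\<in>X. p x * P x y * h i (restrict x (C i)) (restrict y (C i)))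
         = (\<Sum>xc\<in>PiE (C i) S. \<Sum>yc\<in>PiE (C i) S. num (C i) xc yc * h i xc yc)"
        using Csub i by (intro dsum) auto
      also have "\<dots> = Ri i" unfolding Ri_def
      proof (intro sum.cong refl)
        fix xc yc assume xc: "xc \<in> PiE (C i) S" and yc: "yc \<in> PiE (C i) S"
        show "num (C i) xc yc * h i xc yc = pm i xc *
          (if Q i xc yc = 0 then 0 else Q i xc yc * ln (Q i xc yc / L i xc yc))"
        proof (cases "Q i xc yc = 0")
          case True then show ?thesis by (simp add: h_def)
        next
          case False
          then have qp: "Q i xc yc > 0" using mk_nonneg[of "C i"] by (simp add: less_le)
          have lp: "L i xc yc > 0" using supp[OF i xc yc] Lnn[OF i xc yc] False by (simp add: less_le)
          show ?thesis using num_eq[of "C i" xc yc] Csub i xc qp lp False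
            by (simp add: h_def ln_div)
        qed
      qed
      finally show "(\<Sum>x\<in>X. \<Sum>y\<in>X. p x * P x y * h i (restrict x (C i)) (restrict y (C i))) = Ri i" .
    qed
    also have "(\<Sum>x\<in>X. \<Sum>y\<in>X. p x * P x y * (ln (Zf I S n C L x) - ln (ZQ x))) = T"
      unfolding T_def
    proof (rule sum.cong[OF refl])
      fix x assume x: "x \<in> X"
      have "(\<Sum>y\<in>X. p x * P x y * (ln (Zf I S n C L x) - ln (ZQ x)))
          = p x * (ln (Zf I S n C L x) - ln (ZQ x)) * sum (P x) X"
        by (simp only: sum_distrib_left[symmetric] sum_distrib_right[symmetric] mult_ac)
      then show "(\<Sum>y\<in>X. p x * P x y * (ln (Zf I S n C L x) - ln (ZQ x))) = p x * (ln (Zf I S n C L x) - ln (ZQ x))"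
        using P_sum[OF x] by simp
    qed
    finally have ident: "R M = R PP + (\<Sum>i\<in>{1..n}. Ri i) + T" .
    have Tnn: "T \<ge> 0" unfolding T_def
    proof (intro sum_nonneg mult_nonneg_nonneg)
      fix x assume x: "x \<in> X"
      show "p x \<ge> 0" using p_nn x .
      show "ln (Zf I S n C L x) - ln (ZQ x) \<ge> 0" using Zge ZQ_pos[OF x] x ln_mono by (simp add: ln_mono)
    qed
    have Rinn: "Ri i \<ge> 0" if "i \<in> {1..n}" for i using gib[OF that] KLi[OF that] by simp
    have sumKL: "(\<Sum>i\<in>{1..n}. KL (PiE (C i) S) (pm i) (Q i) (L i)) = ereal (\<Sum>i\<in>{1..n}. Ri i)"
      using KLi by simp
    show ?thesis
    proof
      show "KL X p P M \<ge> KL X p P PP + (\<Sum>i\<in>{1..n}. KL (PiE (C i) S) (pm i) (Q i) (L i))"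
        unfolding sumKL KLM KL_PP using ident Tnn by simp
      show "KL X p P M = KL X p P PP \<longrightarrow> (\<forall>x\<in>X. \<forall>y\<in>X. M x y = PP x y)"
      proof
        assume "KL X p P M = KL X p P PP"
        then have "R M = R PP" unfolding KLM KL_PP by simp
        then have z: "(\<Sum>i\<in>{1..n}. Ri i) + T = 0" using ident by simp
        have s0: "(\<Sum>i\<in>{1..n}. Ri i) = 0" 
        proof -
          have "sum Ri {1..n} \<ge> 0" using Rinn by (rule sum_nonneg)
          then show ?thesis using z Tnn by linarith
        qed
        have LQ: "\<forall>xc\<in>PiE (C i) S. \<forall>yc\<in>PiE (C i) S. Q i xc yc = L i xc yc" if i: "i \<in> {1..n}" for i
        proof -
          have "Ri i = 0" using s0 sum_nonneg_eq_0_iff[of "{1..n}" Ri] Rinn i by auto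
          then show ?thesis using gib[OF i] KLi[OF i] by (simp add: zero_ereal_def)
        qed
        have pLQ: "(\<Prod>i\<in>{1..n}. L i (restrict x (C i)) (restrict y (C i)))
            = (\<Prod>i\<in>{1..n}. Q i (restrict x (C i)) (restrict y (C i)))" if "x \<in> X" "y \<in> X" for x y
          using LQ restr_in Csub that by (intro prod.cong refl) auto
        have ZLQ: "Zf I S n C L x = ZQ x" if "x \<in> X" for x
          unfolding Zf_def using pLQ that by (intro sum.cong refl) auto
        show "\<forall>x\<in>X. \<forall>y\<in>X. M x y = PP x y"
          using fact pLQ ZLQ unfolding proj_kernel_def by simp
      qed
    qed
  qed
  then show "KL X p P M \<ge> KL X p P PP + (\<Sum>i\<in>{1..n}. KL (PiE (C i) S) (pm i) (Q i) (L i))"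
    and "KL X p P M = KL X p P PP \<Longrightarrow> \<forall>x\<in>X. \<forall>y\<in>X. M x y = PP x y" by auto
qed

end

theorem theorem2p28:
  fixes d n :: nat
    and S :: "nat \<Rightarrow> 'a set"
    and E :: "nat \<Rightarrow> nat \<Rightarrow> bool"
    and C :: "nat \<Rightarrow> nat set"
    and p :: "(nat \<Rightarrow> 'a) \<Rightarrow> real"
    and P M :: "(nat \<Rightarrow> 'a) \<Rightarrow> (nat \<Rightarrow> 'a) \<Rightarrow> real"
    and L :: "nat \<Rightarrow> (nat \<Rightarrow> 'a) \<Rightarrow> (nat \<Rightarrow> 'a) \<Rightarrow> real"
  defines "X \<equiv> PiE {1..d} S"
  assumes fin: "\<forall>j\<in>{1..d}. finite (S j)"
    and E_sym: "\<forall>j k. E j k \<longrightarrow> E k j"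
    and E_irrefl: "\<forall>j. \<not> E j j"
    and E_dom: "\<forall>j k. E j k \<longrightarrow> j \<in> {1..d} \<and> k \<in> {1..d}"
    and cover: "(\<Union>i\<in>{1..n}. C i) = {1..d}"
    and pi_dist: "prob_dist X p"
    and pi_pos: "\<forall>x\<in>X. p x > 0"
    and P_markov: "markov X P"
    and M_markov: "markov X M"
    and L_markov: "\<forall>i\<in>{1..n}. markov (PiE (C i) S) (L i)"
    and M_fact: "factorizable {1..d} S E n C L M"
    and Z_ge: "\<forall>x\<in>X. Zf {1..d} S n C L x \<ge> Zf {1..d} S n C (\<lambda>i. marg_kernel {1..d} S (C i) p P) x"
  shows "KL X p P M \<ge> KL X p P (proj_kernel {1..d} S n C p P)
           + (\<Sum>i\<in>{1..n}. KL (PiE (C i) S) (marg {1..d} S (C i) p)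
                              (marg_kernel {1..d} S (C i) p P) (L i))
    \<and> (markov X (proj_kernel {1..d} S n C p P)
       \<and> (\<forall>i\<in>{1..n}. markov (PiE (C i) S) (marg_kernel {1..d} S (C i) p P))
       \<and> factorizable {1..d} S E n C (\<lambda>i. marg_kernel {1..d} S (C i) p P) (proj_kernel {1..d} S n C p P)
       \<and> (\<forall>M' L'. markov X M' \<and> (\<forall>i\<in>{1..n}. markov (PiE (C i) S) (L' i))
            \<and> factorizable {1..d} S E n C L' M'
            \<and> (\<forall>x\<in>X. Zf {1..d} S n C L' x \<ge> Zf {1..d} S n C (\<lambda>i. marg_kernel {1..d} S (C i) p P) x)
          \<longrightarrow> KL X p P M' \<ge> KL X p P (proj_kernel {1..d} S n C p P)
            \<and> (KL X p P M' = KL X p P (proj_kernel {1..d} S n C p P)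
                 \<longrightarrow> (\<forall>x\<in>X. \<forall>y\<in>X. M' x y = proj_kernel {1..d} S n C p P x y))))"
  proof -
  have Csub: "\<forall>i\<in>{1..n}. C i \<subseteq> {1..d}" using M_fact unfolding factorizable_def by blast
  have cliq: "\<forall>i\<in>{1..n}. clique E (C i)" using M_fact unfolding factorizable_def by blast
  interpret K: kset "{1..d}" S n C p P
    by unfold_locales (use fin Csub pi_dist pi_pos P_markov in \<open>auto simp: X_def\<close>)
  have XX: "X = PiE {1..d} S" by (simp add: X_def)
  have gibs: "(\<Sum>i\<in>{1..n}. KL (PiE (C i) S) (marg {1..d} S (C i) p) (marg_kernel {1..d} S (C i) p P) (L' i)) \<ge> 0"
    if "\<forall>i\<in>{1..n}. markov (PiE (C i) S) (L' i)" for L'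
  proof (rule sum_nonneg)
    fix i assume i: "i \<in> {1..n}"
    show "KL (PiE (C i) S) (marg {1..d} S (C i) p) (marg_kernel {1..d} S (C i) p P) (L' i) \<ge> 0"
    proof -
      have ci: "C i \<subseteq> {1..d}" using Csub i by blast
      show ?thesis
        using KL_gibbs[of "PiE (C i) S" "marg {1..d} S (C i) p" "marg_kernel {1..d} S (C i) p P" "L' i"]
          K.finPi[OF ci] K.marg_pos[OF ci] K.mk_markov[OF ci] that i by blast
    qed
  qed
  have part1: "KL X p P M \<ge> KL X p P (proj_kernel {1..d} S n C p P)
           + (\<Sum>i\<in>{1..n}. KL (PiE (C i) S) (marg {1..d} S (C i) p)
                              (marg_kernel {1..d} S (C i) p P) (L i))"
    unfolding XX
    by (rule K.main(1)) (use L_markov M_fact Z_ge in \<open>auto simp: factorizable_def X_def\<close>)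
  have part2: "factorizable {1..d} S E n C (\<lambda>i. marg_kernel {1..d} S (C i) p P) (proj_kernel {1..d} S n C p P)"
    unfolding factorizable_def using Csub cliq by (simp add: proj_kernel_def)
  have part3: "KL X p P M' \<ge> KL X p P (proj_kernel {1..d} S n C p P)
            \<and> (KL X p P M' = KL X p P (proj_kernel {1..d} S n C p P)
                 \<longrightarrow> (\<forall>x\<in>X. \<forall>y\<in>X. M' x y = proj_kernel {1..d} S n C p P x y))"
    if h: "markov X M' \<and> (\<forall>i\<in>{1..n}. markov (PiE (C i) S) (L' i))
            \<and> factorizable {1..d} S E n C L' M'
            \<and> (\<forall>x\<in>X. Zf {1..d} S n C L' x \<ge> Zf {1..d} S n C (\<lambda>i. marg_kernel {1..d} S (C i) p P) x)"
    for M' L'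
  proof -
    have Lm: "\<forall>i\<in>{1..n}. markov (PiE (C i) S) (L' i)" using h by blast
    have fa: "\<forall>x\<in>PiE {1..d} S. \<forall>y\<in>PiE {1..d} S. M' x y = (\<Prod>i\<in>{1..n}. L' i (restrict x (C i)) (restrict y (C i))) / Zf {1..d} S n C L' x"
      using h unfolding factorizable_def by blast
    have zg: "\<forall>x\<in>PiE {1..d} S. Zf {1..d} S n C L' x \<ge> Zf {1..d} S n C (\<lambda>i. marg_kernel {1..d} S (C i) p P) x"
      using h unfolding XX by blast
    note m = K.main[OF Lm fa zg]
    have "KL X p P (proj_kernel {1..d} S n C p P) + 0 \<le> KL X p P (proj_kernel {1..d} S n C p P)
           + (\<Sum>i\<in>{1..n}. KL (PiE (C i) S) (marg {1..d} S (C i) p) (marg_kernel {1..d} S (C i) p P) (L' i))"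
      using gibs[OF Lm] by (rule add_left_mono)
    then have "KL X p P M' \<ge> KL X p P (proj_kernel {1..d} S n C p P)"
      using m(1) unfolding XX by simp
    moreover have "KL X p P M' = KL X p P (proj_kernel {1..d} S n C p P)
                 \<longrightarrow> (\<forall>x\<in>X. \<forall>y\<in>X. M' x y = proj_kernel {1..d} S n C p P x y)"
      using m(2) unfolding XX by blast
    ultimately show ?thesis by blast
  qed
  show ?thesis
    using part1 part2 part3 K.PP_markov K.mk_markov Csub unfolding XX by blast
qed

end
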